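(* For each integer $N\ge 1$, let $S_N^{\mathrm{quant}}$ be the $N\times N$ real matrix with entries \[ (S_N^{\mathrm{quant}})_{m,n} = \frac{\sin\frac{\pi}{N}}{\sin \frac{\pi}{N}(m+n-1)} \quad (m+n\neq N+1), \qquad (S_N^{\mathrm{quant}})_{m,n}=0 \quad (m+n=N+1), \] $m,n=1,\dots,N$ (so the entries on the anti-diagonal are zero). Then the set of eigenvalues of $S_N^{\mathrm{quant}}$ is \[ \left\{ (N-1)\sin\tfrac{\pi}{N},\ (N-3)\sin\tfrac{\pi}{N},\ \ldots,\ (3-N)\sin\tfrac{\pi}{N},\ (1-N)\sin\tfrac{\pi}{N}\right\}, \] i.e. $\{(N+1-2k)\sin\frac{\pi}{N} : k=1,\dots,N\}$. *)

theory Defs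
  imports Complex_Main "Jordan_Normal_Form.Char_Poly"
begin

text \<open>The matrix S_N^quant, with 0-based indices i = m-1, j = n-1.\<close>
definition S_quant :: "nat \<Rightarrow> real mat" where
  "S_quant N = mat N N (\<lambda>(i, j).
      if i + j + 2 = N + 1 then 0
      else sin (pi / real N) / sin (pi / real N * (real (i + 1) + real (j + 1) - 1)))"

end

theory Submission
  imports Defs
begin


lemma cos_sum_zero:
  fixes N k :: nat
  assumes "1 \<le> k" "k < N"
  shows "(\<Sum>e<N. cos (2 * real e * (real k * pi / real N))) = 0"
proof -
  define x where "x = real k * pi / real N"
  have x0: "0 < x" "x < pi" using assms by (auto simp: x_def field_simps)
  have sx: "sin x > 0" using x0 sin_gt_zero by auto
  have tel: "2 * sin x * cos (2 * real e * x) = sin ((2 * real (Suc e) - 1) * x) - sin ((2 * real e - 1) * x)" for e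
  proof -
    have "sin ((2 * real (Suc e) - 1) * x) = sin (2 * real e * x + x)" by (simp add: algebra_simps)
    moreover have "sin ((2 * real e - 1) * x) = sin (2 * real e * x - x)" by (simp add: algebra_simps)
    ultimately show ?thesis by (simp add: sin_add sin_diff)
  qed
  have "2 * sin x * (\<Sum>e<N. cos (2 * real e * x)) = (\<Sum>e<N. sin ((2 * real (Suc e) - 1) * x) - sin ((2 * real e - 1) * x))"
    by (simp add: sum_distrib_left tel)
  also have "\<dots> = sin ((2 * real N - 1) * x) - sin ((2 * real 0 - 1) * x)"
    by (rule sum_lessThan_telescope)
  also have "(2 * real N - 1) * x = 2 * real k * pi - x" using assms by (simp add: x_def field_simps)
  also have "sin (2 * real k * pi - x) = - sin x"
  proof -
    have "sin (real (2*k) * pi) = 0" by (rule sin_npi)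
    moreover have "cos (real (2*k) * pi) = 1" by (simp add: cos_npi)
    ultimately show ?thesis by (simp add: sin_diff)
  qed
  finally have "2 * sin x * (\<Sum>e<N. cos (2 * real e * x)) = 0" by simp
  with sx show ?thesis by (simp add: x_def)
qed

lemma sin_e_pos:
  fixes N e :: nat
  assumes "1 \<le> e" "e < N"
  shows "sin (real e * (pi / real N)) > 0"
  using assms by (intro sin_gt_zero) (auto simp: field_simps)

lemma cos_sum_1:
  fixes N k :: nat
  assumes "1 \<le> k" "k < N"
  shows "(\<Sum>e\<in>{1..<N}. cos (2 * real k * (real e * (pi / real N)))) = -1"
proof -
  have "(\<Sum>e<N. cos (2 * real e * (real k * pi / real N))) = 0" by (rule cos_sum_zero[OF assms])
  moreover have "{..<N} = insert 0 {1..<N}" using assms by auto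
  ultimately have "1 + (\<Sum>e\<in>{1..<N}. cos (2 * real e * (real k * pi / real N))) = 0" by simp
  moreover have "(\<Sum>e\<in>{1..<N}. cos (2 * real k * (real e * (pi / real N)))) = (\<Sum>e\<in>{1..<N}. cos (2 * real e * (real k * pi / real N)))"
    by (intro sum.cong refl arg_cong[where f=cos]) simp
  ultimately show ?thesis by linarith
qed

lemma dirichlet_sum:
  fixes N k :: nat
  assumes "1 \<le> k" "k \<le> N"
  shows "(\<Sum>e\<in>{1..<N}. sin ((2 * real k - 1) * (real e * (pi / real N))) / sin (real e * (pi / real N)))
     = real N + 1 - 2 * real k"
  using assms
proof (induction k)
  case 0 then show ?case by simp
next
  case (Suc k)
  show ?case
  proof (cases "k = 0")
    case True
    have "(\<Sum>e\<in>{1..<N}. sin ((2 * real (Suc k) - 1) * (real e * (pi / real N))) / sin (real e * (pi / real N)))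
       = (\<Sum>e\<in>{1..<N}. 1)"
    proof (intro sum.cong refl)
      fix e assume "e \<in> {1..<N}"
      then have "sin (real e * (pi / real N)) > 0" by (intro sin_e_pos) auto
      then show "sin ((2 * real (Suc k) - 1) * (real e * (pi / real N))) / sin (real e * (pi / real N)) = 1"
        using True by simp
    qed
    then show ?thesis using True Suc by simp
  next
    case False
    then have k: "1 \<le> k" "k < N" using Suc by auto
    note IH = Suc.IH[OF k(1) less_imp_le[OF k(2)]]
    have step: "sin ((2 * real (Suc k) - 1) * y) / sin y = sin ((2 * real k - 1) * y) / sin y + 2 * cos (2 * real k * y)"
      if "sin y \<noteq> 0" for y
    proof -
      have "sin ((2 * real (Suc k) - 1) * y) = sin (2 * real k * y + y)" by (simp add: algebra_simps)
      moreover have "sin ((2 * real k - 1) * y) = sin (2 * real k * y - y)" by (simp add: algebra_simps)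
      ultimately show ?thesis using that by (simp add: sin_add sin_diff field_simps)
    qed
    have "(\<Sum>e\<in>{1..<N}. sin ((2 * real (Suc k) - 1) * (real e * (pi / real N))) / sin (real e * (pi / real N)))
       = (\<Sum>e\<in>{1..<N}. sin ((2 * real k - 1) * (real e * (pi / real N))) / sin (real e * (pi / real N))
            + 2 * cos (2 * real k * (real e * (pi / real N))))"
      using sin_e_pos[of _ N] by (intro sum.cong refl step) (metis atLeastLessThan_iff less_irrefl)
    also have "\<dots> = real N + 1 - 2 * real k + 2 * (-1)"
      by (simp only: sum.distrib sum_distrib_left[symmetric] IH cos_sum_1[OF k])
    finally show ?thesis by simp
  qed
qed

lemma cos_odd_shift: "cos (x + (2 * real k - 1) * pi) = - cos x"
proof -
  have "cos ((2 * real k - 1) * pi) = -1"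
  proof -
    have "(2 * real k - 1) * pi = real (2*k) * pi - pi" by (simp add: algebra_simps)
    then show ?thesis by (simp add: cos_diff cos_npi sin_npi del: of_nat_mult)
  qed
  moreover have "sin ((2 * real k - 1) * pi) = 0"
  proof -
    have "(2 * real k - 1) * pi = real (2*k) * pi - pi" by (simp add: algebra_simps)
    then show ?thesis by (simp add: sin_diff cos_npi sin_npi del: of_nat_mult)
  qed
  ultimately show ?thesis by (simp add: cos_add)
qed

lemma sin_odd_shift: "sin (x + (2 * real k - 1) * pi) = - sin x"
proof -
  have "(2 * real k - 1) * pi = real (2*k) * pi - pi" by (simp add: algebra_simps)
  then have "cos ((2 * real k - 1) * pi) = -1" "sin ((2 * real k - 1) * pi) = 0"
    by (simp_all add: cos_diff sin_diff cos_npi sin_npi del: of_nat_mult)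
  then show ?thesis by (simp add: sin_add)
qed

lemma cos_half_sum_zero:
  fixes N k :: nat
  assumes "1 \<le> N"
  shows "(\<Sum>e\<in>{1..<N}. cos ((2 * real k - 1) * (pi / real N) * real e) / sin (pi / real N * real e)) = 0"
proof -
  let ?f = "\<lambda>e. cos ((2 * real k - 1) * (pi / real N) * real e) / sin (pi / real N * real e)"
  have "sum ?f {1..<N} = sum (\<lambda>i. ?f (N + 1 - Suc i)) {1..<N}"
    by (rule sum.atLeastLessThan_rev)
  also have "\<dots> = sum (\<lambda>i. - ?f i) {1..<N}"
  proof (intro sum.cong refl)
    fix e assume e: "e \<in> {1..<N}"
    then have r: "real (N + 1 - Suc e) = real N - real e" by auto
    have a1: "(2 * real k - 1) * (pi / real N) * (real N - real e) = - ((2 * real k - 1) * (pi / real N) * real e) + (2 * real k - 1) * pi"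
      using assms by (simp add: field_simps)
    have a2: "pi / real N * (real N - real e) = pi - pi / real N * real e"
      using assms by (simp add: field_simps)
    show "?f (N + 1 - Suc e) = - ?f e"
      unfolding r a1 a2 cos_odd_shift by simp
  qed
  finally show ?thesis by (simp add: sum_negf)
qed

lemma periodic_sum:
  fixes h :: "real \<Rightarrow> real" and N i :: nat
  assumes per: "\<And>x. h (x + real N) = h x" and i: "i < N"
  shows "(\<Sum>j<N. if j = i then 0 else h (real i - real j)) = (\<Sum>e\<in>{1..<N}. h (real e))"
proof -
  have "(\<Sum>j<N. if j = i then 0 else h (real i - real j)) = (\<Sum>j\<in>{..<N}-{i}. h (real i - real j))"
    using i by (simp add: sum.If_cases Diff_eq Int_commute)
  also have "\<dots> = (\<Sum>e\<in>{1..<N}. h (real e))"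
  proof (rule sum.reindex_bij_witness[where j = "\<lambda>j. if j < i then i - j else N + i - j"
        and i = "\<lambda>e. if e \<le> i then i - e else N + i - e"])
    fix j assume j: "j \<in> {..<N}-{i}"
    show "h (real (if j < i then i - j else N + i - j)) = h (real i - real j)"
    proof (cases "j < i")
      case True then show ?thesis by (simp add: of_nat_diff)
    next
      case False
      then have "real (N + i - j) = (real i - real j) + real N" using j by auto
      then show ?thesis using False per by simp
    qed
  qed (use i in auto)
  finally show ?thesis .
qed

lemma eig_identity:
  fixes N k i :: nat
  assumes N: "1 \<le> N" and k: "1 \<le> k" "k \<le> N" and i: "i < N"
  shows "(\<Sum>j<N. (if i + j + 2 = N + 1 then 0 else sin (pi / real N) / sin (pi / real N * (real (i + 1) + real (j + 1) - 1)))
            * cos ((2 * real k - 1) * (pi / real N) * real j + (2 * real k - 1) * (pi / real N) / 2 - pi / 4))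
       = (real N + 1 - 2 * real k) * sin (pi / real N) * cos ((2 * real k - 1) * (pi / real N) * real i + (2 * real k - 1) * (pi / real N) / 2 - pi / 4)"
proof -
  define \<theta> where "\<theta> = pi / real N"
  define \<alpha> where "\<alpha> = (2 * real k - 1) * (pi / real N)"
  define \<psi> where "\<psi> = - \<alpha> * real i - \<alpha> / 2 - pi / 4"
  define h1 where "h1 = (\<lambda>d. sin \<theta> * cos (\<alpha> * d) / sin (\<theta> * d))"
  define h2 where "h2 = (\<lambda>d. sin \<theta> * sin (\<alpha> * d) / sin (\<theta> * d))"
  define G where "G = (\<lambda>j. (if i + j + 2 = N + 1 then 0 else sin \<theta> / sin (\<theta> * (real (i + 1) + real (j + 1) - 1)))
            * cos (\<alpha> * real j + \<alpha> / 2 - pi / 4))"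
  have aN: "\<alpha> * real N = (2 * real k - 1) * pi" using N by (simp add: \<alpha>_def)
  have tN: "\<theta> * real N = pi" using N by (simp add: \<theta>_def)
  have "(\<Sum>j<N. G j) = (\<Sum>j<N. G (N - Suc j))" by (rule sum.nat_diff_reindex[symmetric])
  also have "\<dots> = (\<Sum>j<N. if j = i then 0 else cos \<psi> * h1 (real i - real j) - sin \<psi> * h2 (real i - real j))"
  proof (intro sum.cong refl)
    fix j assume j: "j \<in> {..<N}"
    show "G (N - Suc j) = (if j = i then 0 else cos \<psi> * h1 (real i - real j) - sin \<psi> * h2 (real i - real j))"
    proof (cases "j = i")
      case True then show ?thesis using j by (simp add: G_def)
    next
      case False
      let ?d = "real i - real j"
      have c1: "i + (N - Suc j) + 2 \<noteq> N + 1" using j False by auto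
      have r: "real (N - Suc j) = real N - 1 - real j" using j by (auto simp: of_nat_diff)
      have s1: "\<theta> * (real (i + 1) + real (N - Suc j + 1) - 1) = \<theta> * ?d + pi"
        using r tN by (simp add: algebra_simps)
      have s2: "\<alpha> * real (N - Suc j) + \<alpha> / 2 - pi / 4 = (\<psi> + \<alpha> * ?d) + (2 * real k - 1) * pi"
        using r aN by (simp add: \<psi>_def algebra_simps)
      have "G (N - Suc j) = sin \<theta> / sin (\<theta> * ?d + pi) * cos ((\<psi> + \<alpha> * ?d) + (2 * real k - 1) * pi)"
        unfolding G_def by (simp only: c1 if_False s1 s2)
      also have "\<dots> = sin \<theta> / sin (\<theta> * ?d) * cos (\<psi> + \<alpha> * ?d)"
        by (simp only: cos_odd_shift sin_periodic_pi)
      also have "\<dots> = cos \<psi> * h1 ?d - sin \<psi> * h2 ?d"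
        by (simp add: h1_def h2_def cos_add divide_simps) (simp add: algebra_simps)
      finally show ?thesis using False by simp
    qed
  qed
  also have "\<dots> = cos \<psi> * (\<Sum>j<N. if j = i then 0 else h1 (real i - real j))
                 - sin \<psi> * (\<Sum>j<N. if j = i then 0 else h2 (real i - real j))"
    by (simp add: sum_distrib_left sum_subtractf[symmetric] if_distrib cong: if_cong)
  also have "(\<Sum>j<N. if j = i then 0 else h1 (real i - real j)) = (\<Sum>e\<in>{1..<N}. h1 (real e))"
  proof (rule periodic_sum[OF _ i])
    fix x
    have "\<alpha> * (x + real N) = \<alpha> * x + (2 * real k - 1) * pi" using aN by (simp add: algebra_simps)
    moreover have "\<theta> * (x + real N) = \<theta> * x + pi" using tN by (simp add: algebra_simps)
    ultimately show "h1 (x + real N) = h1 x" by (simp add: h1_def cos_odd_shift)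
  qed
  also have "\<dots> = sin \<theta> * (\<Sum>e\<in>{1..<N}. cos ((2 * real k - 1) * (pi / real N) * real e) / sin (pi / real N * real e))"
    by (simp add: h1_def sum_distrib_left \<theta>_def \<alpha>_def)
  also have "\<dots> = 0" using cos_half_sum_zero[OF N] by simp
  also have "(\<Sum>j<N. if j = i then 0 else h2 (real i - real j)) = (\<Sum>e\<in>{1..<N}. h2 (real e))"
  proof (rule periodic_sum[OF _ i])
    fix x
    have "\<alpha> * (x + real N) = \<alpha> * x + (2 * real k - 1) * pi" using aN by (simp add: algebra_simps)
    moreover have "\<theta> * (x + real N) = \<theta> * x + pi" using tN by (simp add: algebra_simps)
    ultimately show "h2 (x + real N) = h2 x" by (simp add: h2_def sin_odd_shift)
  qed
  also have "\<dots> = sin \<theta> * (\<Sum>e\<in>{1..<N}. sin ((2 * real k - 1) * (real e * (pi / real N))) / sin (real e * (pi / real N)))"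
    by (simp add: h2_def sum_distrib_left \<theta>_def \<alpha>_def ac_simps)
  also have "\<dots> = sin \<theta> * (real N + 1 - 2 * real k)" using dirichlet_sum[OF k] by simp
  finally have L: "(\<Sum>j<N. G j) = - sin \<psi> * (sin \<theta> * (real N + 1 - 2 * real k))" by simp
  have "- sin \<psi> = cos (\<alpha> * real i + \<alpha> / 2 - pi / 4)"
  proof -
    have "- sin \<psi> = sin ((\<alpha> * real i + \<alpha> / 2) + pi / 4)" by (simp add: \<psi>_def algebra_simps flip: sin_minus)
    also have "\<dots> = cos (\<alpha> * real i + \<alpha> / 2 - pi / 4)" by (simp add: sin_add cos_diff sin_45 cos_45)
    finally show ?thesis .
  qed
  with L have F: "(\<Sum>j<N. G j) = (real N + 1 - 2 * real k) * sin \<theta> * cos (\<alpha> * real i + \<alpha> / 2 - pi / 4)"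
    by simp
  show ?thesis using F unfolding G_def \<theta>_def \<alpha>_def .
qed


lemma cos_zero_half: "cos x = 0 \<Longrightarrow> -pi/2 < x \<Longrightarrow> x < pi \<Longrightarrow> x = pi/2"
  by (smt (verit, ccfv_SIG) cos_gt_zero_pi cos_monotone_0_pi cos_pi_half
    nonzero_minus_divide_divide nonzero_minus_divide_right pi_half_ge_zero)

lemma eig_each:
  fixes N k :: nat
  assumes N: "1 \<le> N" and k: "1 \<le> k" "k \<le> N"
  shows "eigenvalue (S_quant N) ((real N + 1 - 2 * real k) * sin (pi / real N))"
proof -
  define \<alpha> where "\<alpha> = (2 * real k - 1) * (pi / real N)"
  define v where "v = vec N (\<lambda>j. cos (\<alpha> * real j + \<alpha> / 2 - pi / 4))"
  have dimS: "dim_row (S_quant N) = N" "dim_col (S_quant N) = N" by (simp_all add: S_quant_def)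
  have vc: "v \<in> carrier_vec N" by (simp add: v_def)
  have a_pos: "0 < \<alpha>" using k N by (simp add: \<alpha>_def)
  have a_lt: "\<alpha> < 2 * pi"
  proof -
    have "2 * real k - 1 < 2 * real N" using k by simp
    then have "(2 * real k - 1) / real N < 2" using N by (simp add: field_simps)
    moreover have "\<alpha> = ((2 * real k - 1) / real N) * pi" by (simp add: \<alpha>_def)
    ultimately show ?thesis using pi_gt_zero by (metis mult_strict_right_mono)
  qed
  have nz: "v \<noteq> 0\<^sub>v N"
  proof (cases "cos (\<alpha> * real 0 + \<alpha> / 2 - pi / 4) = 0")
    case False
    then have "v $ 0 \<noteq> 0" using N by (simp add: v_def)
    then show ?thesis using N by auto
  next
    case True
    then have "cos (\<alpha> / 2 - pi / 4) = 0" by simp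
    then have "\<alpha> / 2 - pi / 4 = pi / 2" by (rule cos_zero_half) (use a_pos a_lt in auto)
    then have a3: "\<alpha> = 3 * pi / 2" by simp
    have "N \<noteq> 1"
    proof
      assume "N = 1"
      with k have "k = 1" by simp
      with \<open>N = 1\<close> have "\<alpha> = pi" by (simp add: \<alpha>_def)
      with a3 show False by simp
    qed
    with N have N2: "1 < N" by simp
    have "\<alpha> * real 1 + \<alpha> / 2 - pi / 4 = 2 * pi" using a3 by simp
    then have "v $ 1 = 1" using N2 by (simp add: v_def)
    then show ?thesis using N2 by auto
  qed
  have eq: "S_quant N *\<^sub>v v = ((real N + 1 - 2 * real k) * sin (pi / real N)) \<cdot>\<^sub>v v"
  proof (rule eq_vecI)
    show "dim_vec (S_quant N *\<^sub>v v) = dim_vec (((real N + 1 - 2 * real k) * sin (pi / real N)) \<cdot>\<^sub>v v)"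
      by (simp add: dimS v_def)
  next
    fix i assume "i < dim_vec (((real N + 1 - 2 * real k) * sin (pi / real N)) \<cdot>\<^sub>v v)"
    then have i: "i < N" by (simp add: v_def)
    have "(S_quant N *\<^sub>v v) $ i = (\<Sum>j<N. (if i + j + 2 = N + 1 then 0 else sin (pi / real N) / sin (pi / real N * (real (i + 1) + real (j + 1) - 1)))
            * cos ((2 * real k - 1) * (pi / real N) * real j + (2 * real k - 1) * (pi / real N) / 2 - pi / 4))"
      using i by (simp add: dimS scalar_prod_def S_quant_def v_def \<alpha>_def lessThan_atLeast0)
    also have "\<dots> = (real N + 1 - 2 * real k) * sin (pi / real N) * cos ((2 * real k - 1) * (pi / real N) * real i + (2 * real k - 1) * (pi / real N) / 2 - pi / 4)"
      by (rule eig_identity[OF N k i])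
    also have "\<dots> = (((real N + 1 - 2 * real k) * sin (pi / real N)) \<cdot>\<^sub>v v) $ i"
      using i by (simp add: v_def \<alpha>_def)
    finally show "(S_quant N *\<^sub>v v) $ i = (((real N + 1 - 2 * real k) * sin (pi / real N)) \<cdot>\<^sub>v v) $ i" .
  qed
  show ?thesis unfolding eigenvalue_def eigenvector_def
    using vc nz eq dimS by auto
qed

theorem mainTheorem5:
  fixes N :: nat
  assumes "N \<ge> 1"
  shows "{x. eigenvalue (S_quant N) x} =
         {(real N + 1 - 2 * real k) * sin (pi / real N) | k. k \<in> {1..N}}"
proof -
  define f where "f = (\<lambda>k::nat. (real N + 1 - 2 * real k) * sin (pi / real N))"
  have V: "{(real N + 1 - 2 * real k) * sin (pi / real N) | k. k \<in> {1..N}} = f ` {1..N}"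
    by (auto simp: f_def)
  have SC: "S_quant N \<in> carrier_mat N N" by (simp add: S_quant_def)
  have E: "{x. eigenvalue (S_quant N) x} = {x. poly (char_poly (S_quant N)) x = 0}"
    using eigenvalue_root_char_poly[OF SC] by auto
  have deg: "degree (char_poly (S_quant N)) = N" and cp0: "char_poly (S_quant N) \<noteq> 0"
    using degree_monic_char_poly[OF SC] by auto
  have finE: "finite {x. eigenvalue (S_quant N) x}" unfolding E using poly_roots_finite[OF cp0] .
  have cardE: "card {x. eigenvalue (S_quant N) x} \<le> N" unfolding E using card_poly_roots_bound[OF cp0] deg by simp
  have sub: "f ` {1..N} \<subseteq> {x. eigenvalue (S_quant N) x}"
    using eig_each[OF assms] by (auto simp: f_def)
  have inj: "inj_on f {1..N}"
  proof (cases "N = 1")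
    case True then show ?thesis by simp
  next
    case False
    with assms have "1 < N" by simp
    then have "sin (pi / real N) > 0" by (intro sin_gt_zero) (auto simp: field_simps)
    then show ?thesis by (auto simp: inj_on_def f_def)
  qed
  have cardV: "card (f ` {1..N}) = N" using card_image[OF inj] by simp
  have "f ` {1..N} = {x. eigenvalue (S_quant N) x}"
    by (rule card_subset_eq[OF finE sub]) (use cardV cardE card_mono[OF finE sub] in linarith)
  then show ?thesis using V by simp
qed

end
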